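(* Let $\mathbb{R}^4$ have coordinates $(x_1,y_1,x_2,y_2)$ and consider symplectic forms $\omega_1 = f_1(x_1,y_1)\,dx_1\wedge dy_1 + f_2(x_2,y_2)\,dx_2\wedge dy_2$ and $\omega_2 = g_1(x_1,y_1)\,dx_1\wedge dy_1 + g_2(x_2,y_2)\,dx_2\wedge dy_2$, where $f_1,f_2,g_1,g_2$ are smooth and nowhere vanishing. Let $\varphi = (\varphi^1,\varphi^2,\varphi^3,\varphi^4)\in\operatorname{Symp}(\mathbb{R}^4,\omega_{\mathrm{std}})$ with $\varphi^*\omega_1 = \omega_2$. Then for each $x\in\mathbb{R}^4$, either $f_1(\varphi^1(x),\varphi^2(x)) = g_1(x_1,y_1)$ and $f_2(\varphi^3(x),\varphi^4(x)) = g_2(x_2,y_2)$, or $f_1(\varphi^1(x),\varphi^2(x)) = g_2(x_2,y_2)$ and $f_2(\varphi^3(x),\varphi^4(x)) = g_1(x_1,y_1)$.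
   Context: $\omega_{\mathrm{std}} = dx_1\wedge dy_1 + dx_2\wedge dy_2$. $\operatorname{Symp}(\mathbb{R}^4,\omega_{\mathrm{std}})$ is the set of diffeomorphisms $\varphi$ of $\mathbb{R}^4$ with $\varphi^*\omega_{\mathrm{std}} = \omega_{\mathrm{std}}$, where $(\varphi^*\omega)(x)(v,w) = \omega(\varphi(x))(d\varphi_x v, d\varphi_x w)$. *)

theory Defs
  imports "HOL-Analysis.Analysis"
begin

fun Ck :: "nat \<Rightarrow> ('a::euclidean_space \<Rightarrow> 'b::euclidean_space) \<Rightarrow> bool" where
  "Ck 0 f = continuous_on UNIV f"
| "Ck (Suc k) f = (\<exists>f'. (\<forall>x. (f has_derivative f' x) (at x)) \<and> (\<forall>v. Ck k (\<lambda>x. f' x v)))"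

definition smooth :: "('a::euclidean_space \<Rightarrow> 'b::euclidean_space) \<Rightarrow> bool" where
  "smooth f \<longleftrightarrow> (\<forall>k. Ck k f)"

definition smooth2 :: "(real \<Rightarrow> real \<Rightarrow> real) \<Rightarrow> bool" where
  "smooth2 f \<longleftrightarrow> smooth (\<lambda>p::real \<times> real. f (fst p) (snd p))"

text \<open>R^4 with coordinates (x1,y1,x2,y2) = (p$1,p$2,p$3,p$4). A 2-form is given pointwise
  as a function p v w. The form a(x1,y1) dx1/\dy1 + b(x2,y2) dx2/\dy2:\<close>
definition split_form :: "(real \<Rightarrow> real \<Rightarrow> real) \<Rightarrow> (real \<Rightarrow> real \<Rightarrow> real)
    \<Rightarrow> real^4 \<Rightarrow> real^4 \<Rightarrow> real^4 \<Rightarrow> real" where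
  "split_form a b p v w =
     a (p$1) (p$2) * (v$1 * w$2 - v$2 * w$1) + b (p$3) (p$4) * (v$3 * w$4 - v$4 * w$3)"

definition omega_std :: "real^4 \<Rightarrow> real^4 \<Rightarrow> real^4 \<Rightarrow> real" where
  "omega_std = split_form (\<lambda>_ _. 1) (\<lambda>_ _. 1)"

definition pullback :: "(real^4 \<Rightarrow> real^4) \<Rightarrow> (real^4 \<Rightarrow> real^4 \<Rightarrow> real^4 \<Rightarrow> real)
    \<Rightarrow> real^4 \<Rightarrow> real^4 \<Rightarrow> real^4 \<Rightarrow> real" where
  "pullback \<phi> \<omega> p v w =
     \<omega> (\<phi> p) (frechet_derivative \<phi> (at p) v) (frechet_derivative \<phi> (at p) w)"

definition diffeo :: "(real^4 \<Rightarrow> real^4) \<Rightarrow> bool" where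
  "diffeo \<phi> \<longleftrightarrow> bij \<phi> \<and> smooth \<phi> \<and> smooth (inv \<phi>)"

definition Symp_std :: "(real^4 \<Rightarrow> real^4) set" where
  "Symp_std = {\<phi>. diffeo \<phi> \<and> pullback \<phi> omega_std = omega_std}"

end

theory Submission
  imports Defs
begin

definition om :: "real^4 \<Rightarrow> real^4 \<Rightarrow> real" where
  "om u w = u$1*w$2 - u$2*w$1 + u$3*w$4 - u$4*w$3"

definition sc :: "real \<Rightarrow> real \<Rightarrow> real^4 \<Rightarrow> real^4" where
  "sc p q u = (\<chi> i. if i = 1 \<or> i = 2 then p * u$i else q * u$i)"

lemma sc_nth[simp]: "sc p q u $ 1 = p * u$1" "sc p q u $ 2 = p * u$2"
  "sc p q u $ 3 = q * u$3" "sc p q u $ 4 = q * u$4"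
  by (simp_all add: sc_def)

lemma om_nondeg: assumes "\<forall>w. om X w = 0" shows "X = 0"
proof -
  have "om X (axis 2 1) = 0" "om X (axis 1 1) = 0" "om X (axis 4 1) = 0" "om X (axis 3 1) = 0"
    using assms by auto
  then have "X$1 = 0" "X$2 = 0" "X$3 = 0" "X$4 = 0" by (simp_all add: om_def axis_def)
  then show ?thesis by (simp add: vec_eq_iff forall_4)
qed

lemma om_diff: "om (X - Y) w = om X w - om Y w"
  by (simp add: om_def algebra_simps)

lemma om_sc: "om (sc p q u) w = p * (u$1*w$2 - u$2*w$1) + q * (u$3*w$4 - u$4*w$3)"
  by (simp add: om_def algebra_simps)

lemma eig: assumes "sc p q u = r *\<^sub>R u" "u \<noteq> 0" shows "r = p \<or> r = q"
proof -
  obtain i where i: "u$i \<noteq> 0" using assms(2) by (auto simp: vec_eq_iff)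
  have "i = 1 \<or> i = 2 \<or> i = 3 \<or> i = 4" using exhaust_4 by blast
  then show ?thesis using i assms(1) unfolding vec_eq_iff
    by (auto dest!: spec[of _ i])
qed

lemma key:
  fixes L :: "real^4 \<Rightarrow> real^4"
  assumes lin: "linear L"
    and sy: "\<And>v w. om (L v) (L w) = om v w"
    and F: "\<And>v w. om (sc a b (L v)) (L w) = om (sc c d v) w"
  shows "(a = c \<and> b = d) \<or> (a = d \<and> b = c)"
proof -
  have inj0: "v = 0" if "L v = 0" for v
    using om_nondeg[of v] sy[of v] that linear_0[OF lin] by (simp add: om_def)
  have "inj L"
    by (metis (no_types, lifting) inj0 injI eq_iff_diff_eq_0 lin linear_diff)
  then have surj: "surj L" using linear_injective_imp_surjective lin by blast
  have comm: "sc a b (L v) = L (sc c d v)" for v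
  proof -
    have "\<forall>w. om (sc a b (L v) - L (sc c d v)) w = 0"
    proof
      fix w
      obtain w' where "w = L w'" using surj by (metis surjD)
      then show "om (sc a b (L v) - L (sc c d v)) w = 0"
        by (simp add: om_diff F sy)
    qed
    from om_nondeg[OF this] show ?thesis by simp
  qed
  have scs: "sc p p u = p *\<^sub>R u" for p q u
    by (simp add: vec_eq_iff forall_4)
  have ax1: "sc c d (axis 1 1) = c *\<^sub>R axis 1 1" "sc c d (axis 3 1) = d *\<^sub>R axis 3 1"
    "sc a b (axis 1 1) = a *\<^sub>R axis 1 1" "sc a b (axis 3 1) = b *\<^sub>R axis 3 1"
    by (simp_all add: vec_eq_iff forall_4 axis_def)
  have nz: "axis (1::4) (1::real) \<noteq> 0" "axis (3::4) (1::real) \<noteq> 0"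
    by (simp_all add: axis_eq_0_iff)
  have c: "c = a \<or> c = b"
  proof (rule eig)
    show "sc a b (L (axis 1 1)) = c *\<^sub>R L (axis 1 1)"
      using comm[of "axis 1 1"] ax1 by (simp add: linear_scale[OF lin])
    show "L (axis 1 1) \<noteq> 0" using inj0 nz by blast
  qed
  have d: "d = a \<or> d = b"
  proof (rule eig)
    show "sc a b (L (axis 3 1)) = d *\<^sub>R L (axis 3 1)"
      using comm[of "axis 3 1"] ax1 by (simp add: linear_scale[OF lin])
    show "L (axis 3 1) \<noteq> 0" using inj0 nz by blast
  qed
  obtain v1 where v1: "L v1 = axis 1 1" using surj by (metis surjD)
  obtain v3 where v3: "L v3 = axis 3 1" using surj by (metis surjD)
  have ea: "a = c \<or> a = d"
  proof (rule eig)
    have "L (sc c d v1) = L (a *\<^sub>R v1)"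
      using comm[of v1] v1 ax1 by (simp add: linear_scale[OF lin])
    then show "sc c d v1 = a *\<^sub>R v1" using \<open>inj L\<close> by (simp add: inj_eq)
    show "v1 \<noteq> 0" using v1 nz linear_0[OF lin] by auto
  qed
  have eb: "b = c \<or> b = d"
  proof (rule eig)
    have "L (sc c d v3) = L (b *\<^sub>R v3)"
      using comm[of v3] v3 ax1 by (simp add: linear_scale[OF lin])
    then show "sc c d v3 = b *\<^sub>R v3" using \<open>inj L\<close> by (simp add: inj_eq)
    show "v3 \<noteq> 0" using v3 nz linear_0[OF lin] by auto
  qed
  show ?thesis using c d ea eb by auto
qed

theorem lemma6p1:
  fixes f1 f2 g1 g2 :: "real \<Rightarrow> real \<Rightarrow> real" and \<phi> :: "real^4 \<Rightarrow> real^4"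
  assumes "smooth2 f1" "smooth2 f2" "smooth2 g1" "smooth2 g2"
    and "\<And>a b. f1 a b \<noteq> 0" "\<And>a b. f2 a b \<noteq> 0" "\<And>a b. g1 a b \<noteq> 0" "\<And>a b. g2 a b \<noteq> 0"
    and "\<phi> \<in> Symp_std"
    and "pullback \<phi> (split_form f1 f2) = split_form g1 g2"
  shows "\<forall>x::real^4.
     (f1 (\<phi> x $ 1) (\<phi> x $ 2) = g1 (x$1) (x$2) \<and> f2 (\<phi> x $ 3) (\<phi> x $ 4) = g2 (x$3) (x$4)) \<or>
     (f1 (\<phi> x $ 1) (\<phi> x $ 2) = g2 (x$3) (x$4) \<and> f2 (\<phi> x $ 3) (\<phi> x $ 4) = g1 (x$1) (x$2))"
proof
  fix x :: "real^4"
  have sm: "smooth \<phi>" and ps: "pullback \<phi> omega_std = omega_std"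
    using assms(9) by (auto simp: Symp_std_def diffeo_def)
  from sm have "Ck (Suc 0) \<phi>" by (simp add: smooth_def)
  then obtain f' where f': "\<And>y. (\<phi> has_derivative f' y) (at y)" by auto
  define L where "L = frechet_derivative \<phi> (at x)"
  have LL: "L = f' x" unfolding L_def using frechet_derivative_at[OF f'] by simp
  have lin: "linear L" unfolding LL using f' has_derivative_linear by blast
  have sy: "om (L v) (L w) = om v w" for v w
  proof -
    have "pullback \<phi> omega_std x v w = omega_std x v w" using ps by simp
    then show ?thesis
      by (simp add: pullback_def L_def omega_std_def split_form_def om_def)
  qed
  have F: "om (sc (f1 (\<phi> x $ 1) (\<phi> x $ 2)) (f2 (\<phi> x $ 3) (\<phi> x $ 4)) (L v)) (L w)
      = om (sc (g1 (x$1) (x$2)) (g2 (x$3) (x$4)) v) w" for v w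
  proof -
    have "pullback \<phi> (split_form f1 f2) x v w = split_form g1 g2 x v w" using assms(10) by simp
    then show ?thesis
      by (simp add: pullback_def L_def split_form_def om_sc)
  qed
  show "(f1 (\<phi> x $ 1) (\<phi> x $ 2) = g1 (x$1) (x$2) \<and> f2 (\<phi> x $ 3) (\<phi> x $ 4) = g2 (x$3) (x$4)) \<or>
     (f1 (\<phi> x $ 1) (\<phi> x $ 2) = g2 (x$3) (x$4) \<and> f2 (\<phi> x $ 3) (\<phi> x $ 4) = g1 (x$1) (x$2))"
    by (rule key[OF lin sy F])
qed

end
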